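(* Assume $f$ is in Case 4. For every $0<l<\alpha$ there exist positive numbers $r_1,r_2$, which can be taken arbitrarily small, such that $f(U^{l,+}_{r_1,r_2})\subset U^{l,+}_{r_1,r_2}$, where $U^{l,+}_{r_1,r_2}=\{|z|<r_1,\ |w|<r_2|z|^l\}$.
   Context: Let $f(z,w)=(p(z),q(z,w))$ be a holomorphic skew product defined near the origin of $\mathbb{C}^2$ with $p(z)=az^{\delta}+O(z^{\delta+1})$, $a\neq0$, $\delta\ge2$, and $q(z,w)=\sum_{i,j\ge0}b_{ij}z^iw^j$ with $b_{00}=b_{01}=0$. The Newton polygon $N(q)$ is the convex hull of $\bigcup_{b_{ij}\ne0}\{(x,y):x\ge i,\ y\ge j\}$, with vertices $(n_1,m_1),\dots,(n_s,m_s)$, $n_1<\dots<n_s$, $m_1>\dots>m_s$. For $1\le k\le s-1$, $T_k$ is the $y$-intercept of the line through $(n_k,m_k)$ and $(n_{k+1},m_{k+1})$. Case 4 means $s>2$ and $T_k\le\delta\le T_{k-1}$ for some $2\le k\le s-1$; then set $(\gamma,d)=(n_k,m_k)$ (so $\gamma>0$, $\delta>d\ge1$) and $\alpha=\gamma/(\delta-d)$. *)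

theory Defs
  imports "HOL-Analysis.Analysis"
begin

text \<open>Newton polygon of a power series with coefficients b (i,j) of z^i w^j:
  convex hull of the union of the quadrants {x \<ge> i, y \<ge> j} over the support.\<close>
definition newton_polygon :: "(nat \<times> nat \<Rightarrow> complex) \<Rightarrow> (real \<times> real) set" where
  "newton_polygon b =
     convex hull (\<Union>ij\<in>{ij. b ij \<noteq> 0}. {xy. real (fst ij) \<le> fst xy \<and> real (snd ij) \<le> snd xy})"

definition np_vertices :: "(nat \<times> nat \<Rightarrow> complex) \<Rightarrow> (real \<times> real) set" where
  "np_vertices b = {v. v extreme_point_of newton_polygon b}"

definition np_num :: "(nat \<times> nat \<Rightarrow> complex) \<Rightarrow> nat" where
  "np_num b = card (np_vertices b)"

text \<open>The k-th vertex (n_k, m_k), 1-indexed, ordered by increasing first coordinate.\<close>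
definition np_vertex :: "(nat \<times> nat \<Rightarrow> complex) \<Rightarrow> nat \<Rightarrow> real \<times> real" where
  "np_vertex b k = (THE v. v \<in> np_vertices b \<and> card {u \<in> np_vertices b. fst u < fst v} = k - 1)"

text \<open>T_k: y-intercept of the line through the k-th and (k+1)-th vertices.\<close>
definition np_T :: "(nat \<times> nat \<Rightarrow> complex) \<Rightarrow> nat \<Rightarrow> real" where
  "np_T b k = (let n1 = fst (np_vertex b k); m1 = snd (np_vertex b k);
                   n2 = fst (np_vertex b (Suc k)); m2 = snd (np_vertex b (Suc k))
               in m1 + n1 * (m1 - m2) / (n2 - n1))"

definition U_region :: "real \<Rightarrow> real \<Rightarrow> real \<Rightarrow> (complex \<times> complex) set" where
  "U_region l r1 r2 = {(z, w). cmod z < r1 \<and> cmod w < r2 * cmod z powr l}"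

end

theory Submission
  imports Defs
begin


abbreviation NQ :: "(nat \<times> nat \<Rightarrow> complex) \<Rightarrow> (real \<times> real) set" where
  "NQ b \<equiv> (\<Union>ij\<in>{ij. b ij \<noteq> 0}. {xy. real (fst ij) \<le> fst xy \<and> real (snd ij) \<le> snd xy})"

lemma P_up:
  assumes "x \<in> newton_polygon b" "0 \<le> c1" "0 \<le> c2"
  shows "x + (c1,c2) \<in> newton_polygon b"
proof -
  have "(\<lambda>y. (c1,c2) + y) ` NQ b \<subseteq> NQ b" using assms(2,3) by force
  hence "convex hull ((\<lambda>y. (c1,c2) + y) ` NQ b) \<subseteq> convex hull NQ b" by (rule hull_mono)
  moreover have "convex hull ((\<lambda>y. (c1,c2) + y) ` NQ b) = (\<lambda>y. (c1,c2) + y) ` (convex hull NQ b)"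
    by (rule convex_hull_translation)
  ultimately show ?thesis using assms(1) unfolding newton_polygon_def by (auto simp: add.commute)
qed

lemma supp_in_P:
  assumes "b (i,j) \<noteq> 0" shows "(real i, real j) \<in> newton_polygon b"
proof -
  have "(real i, real j) \<in> NQ b" by (rule UN_I[of "(i,j)"]) (use assms in auto)
  thus ?thesis unfolding newton_polygon_def by (rule hull_inc)
qed

lemma convex_P: "convex (newton_polygon b)"
  unfolding newton_polygon_def by simp

lemma ext_not_dom:
  assumes "v extreme_point_of newton_polygon b" "x \<in> newton_polygon b"
    "fst x \<le> fst v" "snd x \<le> snd v"
  shows "x = v"
proof (rule ccontr)
  assume ne: "x \<noteq> v"
  obtain x1 x2 where xx: "x = (x1,x2)" by fastforce
  obtain v1 v2 where vv: "v = (v1,v2)" by fastforce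
  have le: "x1 \<le> v1" "x2 \<le> v2" using assms(3,4) xx vv by auto
  have y: "(x1 + 2*(v1-x1), x2 + 2*(v2-x2)) \<in> newton_polygon b"
    using P_up[OF assms(2), of "2*(v1-x1)" "2*(v2-x2)"] le xx by simp
  have "(x1,x2) \<noteq> (x1 + 2*(v1-x1), x2 + 2*(v2-x2))" using ne xx vv by auto
  moreover have "(v1,v2) = (1 - 1/2) *\<^sub>R (x1,x2) + (1/2) *\<^sub>R (x1 + 2*(v1-x1), x2 + 2*(v2-x2))"
    by (simp add: field_simps)
  ultimately have "v \<in> open_segment x (x1 + 2*(v1-x1), x2 + 2*(v2-x2))"
    unfolding in_segment xx vv by (intro conjI exI[of _ "1/2"]) simp_all
  thus False using assms(1) assms(2) y unfolding extreme_point_of_def by blast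
qed

lemma ext_in_supp:
  assumes "v extreme_point_of newton_polygon b"
  shows "\<exists>i j. b (i,j) \<noteq> 0 \<and> v = (real i, real j)"
proof -
  have "v \<in> NQ b" using extreme_point_of_convex_hull assms unfolding newton_polygon_def by blast
  then obtain ij where ij0: "b ij \<noteq> 0" "real (fst ij) \<le> fst v" "real (snd ij) \<le> snd v" by blast
  define i where "i = fst ij"
  define j where "j = snd ij"
  have ij: "b (i,j) \<noteq> 0" "real i \<le> fst v" "real j \<le> snd v" using ij0 unfolding i_def j_def by auto
  have "(real i, real j) = v" using ext_not_dom[OF assms supp_in_P[of b i j, OF ij(1)]] ij by simp
  thus ?thesis using ij by blast
qed

lemma ext_fst_eq:
  assumes "u extreme_point_of newton_polygon b" "v extreme_point_of newton_polygon b"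
    "fst u = fst v" shows "u = v"
proof (cases "snd u \<le> snd v")
  case True thus ?thesis using ext_not_dom[OF assms(2), of u] assms extreme_point_of_def by auto
next
  case False thus ?thesis using ext_not_dom[OF assms(1), of v] assms extreme_point_of_def by auto
qed

lemma ext_fst_less:
  assumes "u extreme_point_of newton_polygon b" "v extreme_point_of newton_polygon b"
    "fst u < fst v" shows "snd v < snd u"
  using ext_not_dom[OF assms(2), of u] assms extreme_point_of_def by force

definition vrank :: "(nat \<times> nat \<Rightarrow> complex) \<Rightarrow> real \<times> real \<Rightarrow> nat" where
  "vrank b x = card {u \<in> np_vertices b. fst u < fst x}"

lemma vrank_less:
  assumes fin: "finite (np_vertices b)" and x: "x \<in> np_vertices b" and y: "y \<in> np_vertices b"
    and lt: "fst x < fst y"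
  shows "vrank b x < vrank b y"
proof -
  have "insert x {u \<in> np_vertices b. fst u < fst x} \<subseteq> {u \<in> np_vertices b. fst u < fst y}"
    using x lt by auto
  hence "card (insert x {u \<in> np_vertices b. fst u < fst x}) \<le> card {u \<in> np_vertices b. fst u < fst y}"
    by (rule card_mono[rotated]) (use fin in auto)
  moreover have "card (insert x {u \<in> np_vertices b. fst u < fst x}) = Suc (vrank b x)"
    unfolding vrank_def by (subst card_insert_disjoint) (use fin in auto)
  ultimately show ?thesis unfolding vrank_def by simp
qed

lemma vrank_bound:
  assumes fin: "finite (np_vertices b)" and x: "x \<in> np_vertices b"
  shows "vrank b x < card (np_vertices b)"
  unfolding vrank_def by (rule psubset_card_mono) (use fin x in auto)

lemma vrank_inj:
  assumes fin: "finite (np_vertices b)"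
  shows "inj_on (vrank b) (np_vertices b)"
proof (rule inj_onI)
  fix x y assume x: "x \<in> np_vertices b" and y: "y \<in> np_vertices b" and e: "vrank b x = vrank b y"
  have "fst x = fst y"
  proof (rule ccontr)
    assume "fst x \<noteq> fst y"
    hence "fst x < fst y \<or> fst y < fst x" by auto
    thus False using vrank_less[OF fin x y] vrank_less[OF fin y x] e by auto
  qed
  thus "x = y" using ext_fst_eq x y unfolding np_vertices_def by blast
qed

lemma vrank_image:
  assumes fin: "finite (np_vertices b)"
  shows "vrank b ` np_vertices b = {0..<card (np_vertices b)}"
proof (rule card_subset_eq)
  show "finite {0..<card (np_vertices b)}" by simp
  show "vrank b ` np_vertices b \<subseteq> {0..<card (np_vertices b)}" using vrank_bound[OF fin] by auto
  show "card (vrank b ` np_vertices b) = card {0..<card (np_vertices b)}"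
    using card_image[OF vrank_inj[OF fin]] by simp
qed

lemma np_vertex_props:
  assumes fin: "finite (np_vertices b)" and j: "1 \<le> j" "j \<le> card (np_vertices b)"
  shows "np_vertex b j \<in> np_vertices b \<and> vrank b (np_vertex b j) = j - 1"
proof -
  have "j - 1 \<in> vrank b ` np_vertices b" using vrank_image[OF fin] j by auto
  then obtain x where x: "x \<in> np_vertices b" "vrank b x = j - 1" by auto
  have "np_vertex b j = x" unfolding np_vertex_def
  proof (rule the_equality)
    show "x \<in> np_vertices b \<and> card {u \<in> np_vertices b. fst u < fst x} = j - 1"
      using x unfolding vrank_def by auto
    fix y assume y: "y \<in> np_vertices b \<and> card {u \<in> np_vertices b. fst u < fst y} = j - 1"
    hence "vrank b y = vrank b x" using x unfolding vrank_def by simp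
    thus "y = x" using inj_onD[OF vrank_inj[OF fin]] x y by blast
  qed
  thus ?thesis using x by simp
qed

lemma np_vertex_consec:
  assumes fin: "finite (np_vertices b)" and j: "1 \<le> j" "Suc j \<le> card (np_vertices b)"
  shows "fst (np_vertex b j) < fst (np_vertex b (Suc j))"
    "\<And>x. x \<in> np_vertices b \<Longrightarrow> fst (np_vertex b j) < fst x \<Longrightarrow> fst x < fst (np_vertex b (Suc j)) \<Longrightarrow> False"
proof -
  have A: "np_vertex b j \<in> np_vertices b" "vrank b (np_vertex b j) = j - 1"
    using np_vertex_props[OF fin j(1)] j by auto
  have B: "np_vertex b (Suc j) \<in> np_vertices b" "vrank b (np_vertex b (Suc j)) = j"
    using np_vertex_props[OF fin, of "Suc j"] j by auto
  show "fst (np_vertex b j) < fst (np_vertex b (Suc j))"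
  proof (rule ccontr)
    assume "\<not> ?thesis"
    hence "fst (np_vertex b (Suc j)) < fst (np_vertex b j) \<or> fst (np_vertex b (Suc j)) = fst (np_vertex b j)" by auto
    thus False
    proof
      assume "fst (np_vertex b (Suc j)) < fst (np_vertex b j)"
      from vrank_less[OF fin B(1) A(1) this] A B j show False by simp
    next
      assume "fst (np_vertex b (Suc j)) = fst (np_vertex b j)"
      hence "np_vertex b (Suc j) = np_vertex b j" using ext_fst_eq A B unfolding np_vertices_def by blast
      thus False using A B j by simp
    qed
  qed
  fix x assume x: "x \<in> np_vertices b" "fst (np_vertex b j) < fst x" "fst x < fst (np_vertex b (Suc j))"
  from vrank_less[OF fin A(1) x(1) x(2)] vrank_less[OF fin x(1) B(1) x(3)] A B j show False by simp
qed


lemma nat_le_ceil: "real n \<le> c \<Longrightarrow> n \<le> nat \<lceil>c\<rceil>"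
  by linarith

lemma lexmin_ext:
  assumes sg: "\<sigma> > 0" and ne: "b s0 \<noteq> 0"
  shows "\<exists>p. p extreme_point_of newton_polygon b \<and>
     (\<forall>i j. b (i,j) \<noteq> 0 \<longrightarrow> snd p + \<sigma> * fst p \<le> real j + \<sigma> * real i)"
proof -
  define \<psi> where "\<psi> = (\<lambda>ij::nat\<times>nat. real (snd ij) + \<sigma> * real (fst ij))"
  define S0 where "S0 = {ij. b ij \<noteq> 0 \<and> \<psi> ij \<le> \<psi> s0}"
  have S0sub: "S0 \<subseteq> {..nat \<lceil>\<psi> s0 / \<sigma>\<rceil>} \<times> {..nat \<lceil>\<psi> s0\<rceil>}"
  proof
    fix ij assume "ij \<in> S0"
    hence h: "real (snd ij) + \<sigma> * real (fst ij) \<le> \<psi> s0" unfolding S0_def \<psi>_def by auto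
    have "\<sigma> * real (fst ij) \<le> \<psi> s0" using h by simp
    hence "real (fst ij) \<le> \<psi> s0 / \<sigma>" using sg by (simp add: field_simps)
    moreover have "real (snd ij) \<le> \<psi> s0" using h sg by (smt (verit) mult_nonneg_nonneg of_nat_0_le_iff)
    ultimately show "ij \<in> {..nat \<lceil>\<psi> s0 / \<sigma>\<rceil>} \<times> {..nat \<lceil>\<psi> s0\<rceil>}"
      using nat_le_ceil by (cases ij) auto
  qed
  have finS0: "finite S0" by (rule finite_subset[OF S0sub]) simp
  have s0S0: "s0 \<in> S0" using ne unfolding S0_def by simp
  define m where "m = Min (\<psi> ` S0)"
  have m_le: "\<And>ij. ij \<in> S0 \<Longrightarrow> m \<le> \<psi> ij" unfolding m_def using finS0 by simp
  have m_in: "m \<in> \<psi> ` S0" unfolding m_def using finS0 s0S0 by (intro Min_in) auto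
  define S1 where "S1 = {ij \<in> S0. \<psi> ij = m}"
  have finS1: "finite S1" using finS0 unfolding S1_def by simp
  have S1ne: "S1 \<noteq> {}" using m_in unfolding S1_def by auto
  define x0 where "x0 = Min (fst ` S1)"
  have x0_in: "x0 \<in> fst ` S1" unfolding x0_def using finS1 S1ne by (intro Min_in) auto
  then obtain p0 where p0: "p0 \<in> S1" "fst p0 = x0" by auto
  have x0_le: "\<And>ij. ij \<in> S1 \<Longrightarrow> x0 \<le> fst ij" unfolding x0_def using finS1 by simp
  have key: "\<And>ij. b ij \<noteq> 0 \<Longrightarrow> m \<le> \<psi> ij \<and> (\<psi> ij = m \<longrightarrow> x0 \<le> fst ij)"
  proof -
    fix ij assume bij: "b ij \<noteq> 0"
    show "m \<le> \<psi> ij \<and> (\<psi> ij = m \<longrightarrow> x0 \<le> fst ij)"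
    proof (cases "ij \<in> S0")
      case True
      then show ?thesis using m_le x0_le unfolding S1_def by auto
    next
      case False
      hence "\<psi> s0 < \<psi> ij" using bij unfolding S0_def by auto
      moreover have "m \<le> \<psi> s0" using m_le s0S0 by auto
      ultimately show ?thesis by auto
    qed
  qed
  define \<Psi> where "\<Psi> = (\<lambda>q::real\<times>real. snd q + \<sigma> * fst q)"
  define H where "H = {q. m < \<Psi> q \<or> (\<Psi> q = m \<and> real x0 \<le> fst q)}"
  have convH: "convex H"
    unfolding convex_alt
  proof (intro ballI allI impI)
    fix x y and u :: real assume x: "x \<in> H" and y: "y \<in> H" and u: "0 \<le> u \<and> u \<le> 1"
    have lin: "\<Psi> ((1 - u) *\<^sub>R x + u *\<^sub>R y) = (1-u) * \<Psi> x + u * \<Psi> y"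
      unfolding \<Psi>_def by (simp add: algebra_simps)
    have fl: "fst ((1 - u) *\<^sub>R x + u *\<^sub>R y) = (1-u) * fst x + u * fst y" by simp
    have gx: "m \<le> \<Psi> x" "m \<le> \<Psi> y" using x y unfolding H_def by auto
    show "(1 - u) *\<^sub>R x + u *\<^sub>R y \<in> H"
    proof (cases "m < \<Psi> ((1 - u) *\<^sub>R x + u *\<^sub>R y)")
      case True thus ?thesis unfolding H_def by simp
    next
      case False
      have t1: "0 \<le> (1-u) * (\<Psi> x - m)" "0 \<le> u * (\<Psi> y - m)" using gx u by simp_all
      have sm: "(1-u) * (\<Psi> x - m) + u * (\<Psi> y - m) = \<Psi> ((1 - u) *\<^sub>R x + u *\<^sub>R y) - m"
        using lin by (simp add: algebra_simps)
      hence z: "(1-u) * (\<Psi> x - m) = 0" "u * (\<Psi> y - m) = 0" using t1 False by linarith+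
      have eq: "\<Psi> ((1 - u) *\<^sub>R x + u *\<^sub>R y) = m" using z sm by linarith
      have f1: "0 \<le> (1-u) * (fst x - real x0)"
      proof (cases "1 - u = 0")
        case True thus ?thesis by simp
      next
        case False
        hence "\<Psi> x = m" using z(1) by simp
        hence "real x0 \<le> fst x" using x unfolding H_def by simp
        thus ?thesis using u by simp
      qed
      have f2: "0 \<le> u * (fst y - real x0)"
      proof (cases "u = 0")
        case True thus ?thesis by simp
      next
        case False
        hence "\<Psi> y = m" using z(2) by simp
        hence "real x0 \<le> fst y" using y unfolding H_def by simp
        thus ?thesis using u by simp
      qed
      have "real x0 \<le> (1-u) * fst x + u * fst y" using f1 f2 by (simp add: algebra_simps)
      thus ?thesis unfolding H_def using eq fl by simp
    qed
  qed
  have QH: "NQ b \<subseteq> H"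
  proof
    fix q assume "q \<in> NQ b"
    then obtain ij where ij0: "b ij \<noteq> 0" "real (fst ij) \<le> fst q" "real (snd ij) \<le> snd q" by blast
    define i where "i = fst ij"
    define j where "j = snd ij"
    have ij: "b (i,j) \<noteq> 0" "real i \<le> fst q" "real j \<le> snd q" using ij0 unfolding i_def j_def by auto
    have k: "m \<le> \<psi> (i,j)" "\<psi> (i,j) = m \<longrightarrow> x0 \<le> i" using key[OF ij(1)] by auto
    have "\<psi> (i,j) \<le> \<Psi> q" unfolding \<psi>_def \<Psi>_def using ij sg
      by (simp add: add_mono)
    show "q \<in> H"
    proof (cases "\<Psi> q = m")
      case True
      hence "\<psi> (i,j) = m" using k \<open>\<psi> (i,j) \<le> \<Psi> q\<close> by simp
      hence "real j + \<sigma> * real i = snd q + \<sigma> * fst q" using True unfolding \<psi>_def \<Psi>_def by simp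
      hence "fst q = real i" using ij sg
        by (smt (verit) mult_strict_left_mono)
      thus ?thesis using True k \<open>\<psi> (i,j) = m\<close> unfolding H_def by simp
    next
      case False
      thus ?thesis using k \<open>\<psi> (i,j) \<le> \<Psi> q\<close> unfolding H_def by simp
    qed
  qed
  have PH: "newton_polygon b \<subseteq> H"
    unfolding newton_polygon_def using QH convH by (rule hull_minimal)
  define p where "p = (real (fst p0), real (snd p0))"
  have "b p0 \<noteq> 0" using p0(1) unfolding S1_def S0_def by simp
  hence bp0: "b (fst p0, snd p0) \<noteq> 0" by simp
  have pP: "p \<in> newton_polygon b" unfolding p_def by (rule supp_in_P[of b "fst p0" "snd p0", OF bp0])
  have Psip: "\<Psi> p = m" using p0 unfolding p_def \<Psi>_def \<psi>_def S1_def by simp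
  have ext: "p extreme_point_of newton_polygon b"
    unfolding extreme_point_of_def
  proof (intro conjI pP ballI notI)
    fix x y assume x: "x \<in> newton_polygon b" and y: "y \<in> newton_polygon b"
      and pin: "p \<in> open_segment x y"
    then obtain u where u: "x \<noteq> y" "0 < u" "u < 1" "p = (1 - u) *\<^sub>R x + u *\<^sub>R y"
      unfolding in_segment by auto
    have xH: "x \<in> H" and yH: "y \<in> H" using x y PH by auto
    have lin: "\<Psi> p = (1-u) * \<Psi> x + u * \<Psi> y"
      unfolding \<Psi>_def u(4) by (simp add: algebra_simps)
    have fl: "fst p = (1-u) * fst x + u * fst y" using u(4) by simp
    have gx: "m \<le> \<Psi> x" "m \<le> \<Psi> y" using xH yH unfolding H_def by auto
    have ex: "\<Psi> x = m"
    proof (rule ccontr)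
      assume "\<Psi> x \<noteq> m" hence "m < \<Psi> x" using gx by auto
      hence "(1-u) * m < (1-u) * \<Psi> x" using u by simp
      moreover have "u * m \<le> u * \<Psi> y" using gx u by simp
      ultimately show False using lin Psip by (simp add: algebra_simps)
    qed
    have ey: "\<Psi> y = m"
    proof (rule ccontr)
      assume "\<Psi> y \<noteq> m" hence "m < \<Psi> y" using gx by auto
      hence "u * m < u * \<Psi> y" using u by simp
      moreover have "(1-u) * m \<le> (1-u) * \<Psi> x" using gx u by simp
      ultimately show False using lin Psip by (simp add: algebra_simps)
    qed
    have fx: "real x0 \<le> fst x" "real x0 \<le> fst y" using xH yH ex ey unfolding H_def by auto
    have fp: "fst p = real x0" using p0 unfolding p_def by simp
    have "fst x = real x0"
    proof (rule ccontr)
      assume "fst x \<noteq> real x0" hence "real x0 < fst x" using fx by auto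
      hence "(1-u) * real x0 < (1-u) * fst x" using u by simp
      moreover have "u * real x0 \<le> u * fst y" using fx u by simp
      ultimately show False using fl fp by (simp add: algebra_simps)
    qed
    moreover have "fst y = real x0"
    proof (rule ccontr)
      assume "fst y \<noteq> real x0" hence "real x0 < fst y" using fx by auto
      hence "u * real x0 < u * fst y" using u by simp
      moreover have "(1-u) * real x0 \<le> (1-u) * fst x" using fx u by simp
      ultimately show False using fl fp by (simp add: algebra_simps)
    qed
    moreover have "snd x = m - \<sigma> * fst x" "snd y = m - \<sigma> * fst y" using ex ey unfolding \<Psi>_def by auto
    ultimately have "x = y" by (simp add: prod_eq_iff)
    thus False using u by simp
  qed
  have "\<forall>i j. b (i,j) \<noteq> 0 \<longrightarrow> snd p + \<sigma> * fst p \<le> real j + \<sigma> * real i"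
  proof (intro allI impI)
    fix i j assume "b (i,j) \<noteq> 0"
    hence "m \<le> \<psi> (i,j)" using key by blast
    thus "snd p + \<sigma> * fst p \<le> real j + \<sigma> * real i" using Psip unfolding \<Psi>_def \<psi>_def by simp
  qed
  thus ?thesis using ext by blast
qed


lemma edge_support:
  assumes u: "u extreme_point_of newton_polygon b" and v: "v extreme_point_of newton_polygon b"
    and lt: "fst u < fst v"
    and nobetw: "\<And>x. x extreme_point_of newton_polygon b \<Longrightarrow> fst u < fst x \<Longrightarrow> fst x < fst v \<Longrightarrow> False"
    and bij: "b (i,j) \<noteq> 0"
  shows "snd u + ((snd u - snd v)/(fst v - fst u)) * fst u \<le> real j + ((snd u - snd v)/(fst v - fst u)) * real i"
proof -
  define \<sigma> where "\<sigma> = (snd u - snd v)/(fst v - fst u)"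
  have sv: "snd v < snd u" using ext_fst_less[OF u v lt] .
  have sg: "\<sigma> > 0" unfolding \<sigma>_def using sv lt by simp
  have sgd: "\<sigma> * (fst v - fst u) = snd u - snd v" unfolding \<sigma>_def using lt by simp
  have uv: "snd v + \<sigma> * fst v = snd u + \<sigma> * fst u" using sgd by (simp add: algebra_simps)
  obtain p where p: "p extreme_point_of newton_polygon b"
    "\<forall>i j. b (i,j) \<noteq> 0 \<longrightarrow> snd p + \<sigma> * fst p \<le> real j + \<sigma> * real i"
    using lexmin_ext[of \<sigma> b "(i,j)", OF sg bij] by blast
  have pP: "p \<in> newton_polygon b" and uP: "u \<in> newton_polygon b" and vP: "v \<in> newton_polygon b"
    using p(1) u v unfolding extreme_point_of_def by auto
  have "snd u + \<sigma> * fst u \<le> snd p + \<sigma> * fst p"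
  proof (rule ccontr)
    assume lt2: "\<not> snd u + \<sigma> * fst u \<le> snd p + \<sigma> * fst p"
    consider "fst p \<le> fst u" | "fst v \<le> fst p" | "fst u < fst p \<and> fst p < fst v" by linarith
    then show False
    proof cases
      case 1
      define t where "t = (fst u - fst p)/(fst v - fst p)"
      have dpos: "fst v - fst p > 0" using 1 lt by simp
      have tt: "t * (fst v - fst p) = fst u - fst p" unfolding t_def using dpos by simp
      have t0: "0 \<le> t" unfolding t_def using 1 dpos by simp
      have t1: "t < 1" unfolding t_def using dpos lt by (simp add: divide_less_eq)
      define c where "c = (1-t) *\<^sub>R p + t *\<^sub>R v"
      have cP: "c \<in> newton_polygon b" unfolding c_def
        by (rule convexD_alt[OF convex_P pP vP t0]) (use t1 in simp)
      have fc: "fst c = fst u"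
      proof -
        have "fst c = fst p + t * (fst v - fst p)" unfolding c_def by (simp add: algebra_simps)
        thus ?thesis using tt by simp
      qed
      have "snd c + \<sigma> * fst c = (1-t) * (snd p + \<sigma> * fst p) + t * (snd v + \<sigma> * fst v)"
        unfolding c_def by (simp add: algebra_simps)
      also have "\<dots> < (1-t) * (snd u + \<sigma> * fst u) + t * (snd u + \<sigma> * fst u)"
        using lt2 t1 uv by simp
      finally have "snd c < snd u" using fc by (simp add: algebra_simps)
      moreover have "c = u" using ext_not_dom[OF u cP] fc \<open>snd c < snd u\<close> by simp
      ultimately show False by simp
    next
      case 2
      define t where "t = (fst v - fst u)/(fst p - fst u)"
      have dpos: "fst p - fst u > 0" using 2 lt by simp
      have tt: "t * (fst p - fst u) = fst v - fst u" unfolding t_def using dpos by simp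
      have t0: "0 < t" unfolding t_def using lt dpos by simp
      have t1: "t \<le> 1" unfolding t_def using dpos 2 by (simp add: divide_le_eq)
      define c where "c = (1-t) *\<^sub>R u + t *\<^sub>R p"
      have cP: "c \<in> newton_polygon b" unfolding c_def
        by (rule convexD_alt[OF convex_P uP pP]) (use t0 t1 in simp_all)
      have fc: "fst c = fst v"
      proof -
        have "fst c = fst u + t * (fst p - fst u)" unfolding c_def by (simp add: algebra_simps)
        thus ?thesis using tt by simp
      qed
      have "snd c + \<sigma> * fst c = (1-t) * (snd u + \<sigma> * fst u) + t * (snd p + \<sigma> * fst p)"
        unfolding c_def by (simp add: algebra_simps)
      also have "\<dots> < (1-t) * (snd u + \<sigma> * fst u) + t * (snd u + \<sigma> * fst u)"
        using lt2 t0 by simp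
      finally have "snd c < snd v" using fc uv by (simp add: algebra_simps)
      moreover have "c = v" using ext_not_dom[OF v cP] fc \<open>snd c < snd v\<close> by simp
      ultimately show False by simp
    qed (use nobetw p(1) in blast)
  qed
  thus ?thesis using p(2) bij unfolding \<sigma>_def by fastforce
qed


lemma arith_core:
  fixes x y l \<delta> \<gamma> d s1 s2 :: real
  assumes l: "l > 0" and g: "\<gamma> > 0" and s1: "s1 > 0" and s2: "s2 > 0"
    and T1: "d + s1 * \<gamma> \<ge> \<delta>" and T2: "d + s2 * \<gamma> \<le> \<delta>"
    and la: "l * (\<delta> - d) < \<gamma>" and x0: "x \<ge> 0"
    and e1: "x \<le> \<gamma> \<Longrightarrow> y + s1 * x \<ge> d + s1 * \<gamma>"
    and e2: "\<gamma> \<le> x \<Longrightarrow> y + s2 * x \<ge> d + s2 * \<gamma>"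
  shows "0 \<le> x + l * y - \<delta> * l \<and> (0 < x \<longrightarrow> 0 < x + l * y - \<delta> * l)"
proof -
  have fg: "0 < \<gamma> + l * d - \<delta> * l" using la by (simp add: algebra_simps)
  show ?thesis
  proof (cases "x \<le> \<gamma>")
    case True
    have hy: "l * y \<ge> l * (d + s1 * \<gamma> - s1 * x)" using e1[OF True] l by (intro mult_left_mono) auto
    have f0: "0 \<le> l * (d + s1 * \<gamma> - \<delta>)" using l T1 by simp
    define F where "F = x + l * (d + s1 * \<gamma> - s1 * x) - \<delta> * l"
    have idt: "\<gamma> * F = x * (\<gamma> + l * d - \<delta> * l) + (\<gamma> - x) * (l * (d + s1 * \<gamma> - \<delta>))"
      unfolding F_def by (simp add: algebra_simps)
    have a1: "0 \<le> x * (\<gamma> + l * d - \<delta> * l)" using x0 fg by simp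
    have a2: "0 \<le> (\<gamma> - x) * (l * (d + s1 * \<gamma> - \<delta>))" using True f0 by simp
    have "0 \<le> \<gamma> * F" using idt a1 a2 by simp
    hence F0: "0 \<le> F" using g by (simp add: zero_le_mult_iff)
    have F1: "0 < x \<longrightarrow> 0 < F"
    proof
      assume "0 < x"
      hence "0 < x * (\<gamma> + l * d - \<delta> * l)" using fg by simp
      hence "0 < \<gamma> * F" using idt a2 by simp
      thus "0 < F" using g by (simp add: zero_less_mult_iff)
    qed
    have "F \<le> x + l * y - \<delta> * l" unfolding F_def using hy by simp
    thus ?thesis using F0 F1 by auto
  next
    case False
    hence xg: "\<gamma> \<le> x" by simp
    have hy: "l * y \<ge> l * (d + s2 * \<gamma> - s2 * x)" using e2[OF xg] l by (intro mult_left_mono) auto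
    have "l * (s2 * \<gamma>) \<le> l * (\<delta> - d)" using T2 l by (intro mult_left_mono) auto
    hence "(l * s2) * \<gamma> < 1 * \<gamma>" using la by (simp add: algebra_simps)
    hence ls: "l * s2 < 1" using g by (simp add: mult_less_cancel_right)
    have "0 \<le> (x - \<gamma>) * (1 - l * s2)" using xg ls by simp
    hence "0 < (x - \<gamma>) * (1 - l * s2) + (\<gamma> + l * d - \<delta> * l)" using fg by simp
    moreover have "(x - \<gamma>) * (1 - l * s2) + (\<gamma> + l * d - \<delta> * l) = x + l * (d + s2 * \<gamma> - s2 * x) - \<delta> * l"
      by (simp add: algebra_simps)
    ultimately show ?thesis using hy by simp
  qed
qed


lemma newton_ineq:
  fixes \<delta> k :: nat and l :: real
  assumes b00: "b (0, 0) = 0" and b01: "b (0, 1) = 0"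
    and s_gt: "np_num b > 2"
    and k_range: "2 \<le> k" "k \<le> np_num b - 1"
    and case4: "np_T b k \<le> real \<delta>" "real \<delta> \<le> np_T b (k - 1)"
    and l0: "0 < l" and lal: "l < fst (np_vertex b k) / (real \<delta> - snd (np_vertex b k))"
  shows "\<forall>i j. b (i,j) \<noteq> 0 \<longrightarrow> 0 \<le> real i + l * real j - real \<delta> * l \<and>
            (j \<le> 1 \<longrightarrow> 0 < real i + l * real j - real \<delta> * l)"
proof -
  have fin: "finite (np_vertices b)" using s_gt unfolding np_num_def
    by (metis card.infinite not_less_zero)
  have k1: "1 \<le> k - 1" "Suc (k - 1) \<le> card (np_vertices b)" using k_range s_gt unfolding np_num_def by auto
  have kk: "Suc (k - 1) = k" using k_range by simp
  have k2: "1 \<le> k" "Suc k \<le> card (np_vertices b)" using k_range s_gt unfolding np_num_def by auto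
  define u where "u = np_vertex b (k - 1)"
  define v where "v = np_vertex b k"
  define w where "w = np_vertex b (Suc k)"
  have lt1: "fst u < fst v" using np_vertex_consec(1)[OF fin k1] unfolding u_def v_def kk .
  have nb1: "\<And>x. x extreme_point_of newton_polygon b \<Longrightarrow> fst u < fst x \<Longrightarrow> fst x < fst v \<Longrightarrow> False"
    using np_vertex_consec(2)[OF fin k1] unfolding u_def v_def kk np_vertices_def by blast
  have lt2: "fst v < fst w" using np_vertex_consec(1)[OF fin k2] unfolding w_def v_def .
  have nb2: "\<And>x. x extreme_point_of newton_polygon b \<Longrightarrow> fst v < fst x \<Longrightarrow> fst x < fst w \<Longrightarrow> False"
    using np_vertex_consec(2)[OF fin k2] unfolding w_def v_def np_vertices_def by blast
  have ue: "u extreme_point_of newton_polygon b"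
    using np_vertex_props[OF fin, of "k-1"] k1 unfolding u_def np_vertices_def by auto
  have ve: "v extreme_point_of newton_polygon b"
    using np_vertex_props[OF fin, of "k"] k2 unfolding v_def np_vertices_def by auto
  have we: "w extreme_point_of newton_polygon b"
    using np_vertex_props[OF fin, of "Suc k"] k2 unfolding w_def np_vertices_def by auto
  define s1 where "s1 = (snd u - snd v)/(fst v - fst u)"
  define s2 where "s2 = (snd v - snd w)/(fst w - fst v)"
  have E1: "\<And>i j. b (i,j) \<noteq> 0 \<Longrightarrow> snd u + s1 * fst u \<le> real j + s1 * real i"
    unfolding s1_def by (rule edge_support[OF ue ve lt1 nb1])
  have E2: "\<And>i j. b (i,j) \<noteq> 0 \<Longrightarrow> snd v + s2 * fst v \<le> real j + s2 * real i"
    unfolding s2_def by (rule edge_support[OF ve we lt2 nb2])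
  obtain iu ju where "b (iu,ju) \<noteq> 0" "u = (real iu, real ju)" using ext_in_supp[OF ue] by blast
  hence fu: "0 \<le> fst u" by simp
  have g: "fst v > 0" using fu lt1 by simp
  have s1p: "s1 > 0" unfolding s1_def using ext_fst_less[OF ue ve lt1] lt1 by simp
  have s2p: "s2 > 0" unfolding s2_def using ext_fst_less[OF ve we lt2] lt2 by simp
  have uv: "snd u + s1 * fst u = snd v + s1 * fst v"
  proof -
    have "s1 * (fst v - fst u) = snd u - snd v" unfolding s1_def using lt1 by simp
    thus ?thesis by (simp add: algebra_simps)
  qed
  have T1: "np_T b (k - 1) = snd u + s1 * fst u"
    unfolding np_T_def Let_def kk u_def[symmetric] v_def[symmetric] s1_def by simp
  have T2: "np_T b k = snd v + s2 * fst v"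
    unfolding np_T_def Let_def v_def[symmetric] w_def[symmetric] s2_def by simp
  have c1: "snd v + s1 * fst v \<ge> real \<delta>" using case4(2) T1 uv by simp
  have c2: "snd v + s2 * fst v \<le> real \<delta>" using case4(1) T2 by simp
  have "snd v < real \<delta>" using c2 s2p g by (smt (verit) mult_pos_pos)
  hence la: "l * (real \<delta> - snd v) < fst v" using lal unfolding v_def[symmetric]
    by (simp add: less_divide_eq)
  show ?thesis
  proof (intro allI impI)
    fix i j assume bij: "b (i,j) \<noteq> 0"
    have core: "0 \<le> real i + l * real j - real \<delta> * l \<and> (0 < real i \<longrightarrow> 0 < real i + l * real j - real \<delta> * l)"
    proof (rule arith_core[OF l0 g s1p s2p c1 c2 la])
      show "0 \<le> real i" by simp
      show "real j + s1 * real i \<ge> snd v + s1 * fst v" using E1[OF bij] uv by simp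
      show "real j + s2 * real i \<ge> snd v + s2 * fst v" using E2[OF bij] by simp
    qed
    have "j \<le> 1 \<longrightarrow> 0 < i"
    proof
      assume "j \<le> 1"
      hence "j = 0 \<or> j = 1" by auto
      thus "0 < i" using bij b00 b01 by (cases i) auto
    qed
    thus "0 \<le> real i + l * real j - real \<delta> * l \<and> (j \<le> 1 \<longrightarrow> 0 < real i + l * real j - real \<delta> * l)"
      using core by auto
  qed
qed



lemma powr_pow_nat: "0 < x \<Longrightarrow> (x powr a) ^ n = x powr (a * real n)"
  by (simp add: powr_realpow[symmetric] powr_powr)

lemma term_bound:
  fixes t \<rho> r2 l D \<eta> wn :: real and i j :: nat
  assumes t: "0 < t" "t \<le> \<rho>" and \<rho>1: "\<rho> \<le> 1" and r2: "0 < r2" "r2 \<le> \<rho>" and l: "0 < l"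
    and wn: "0 \<le> wn" "wn \<le> r2 * t powr l"
    and c0: "0 \<le> real i + l * real j - D" and c1: "j \<le> 1 \<Longrightarrow> \<eta> \<le> real i + l * real j - D"
    and \<eta>: "0 < \<eta>"
  shows "t ^ i * wn ^ j \<le> \<rho> ^ i * \<rho> ^ j * t powr D *
           (t powr \<eta> * \<rho> powr (-(D + \<eta> + 1)) + r2 ^ 2 * \<rho> powr (-(D + 2)))"
proof -
  have \<rho>: "0 < \<rho>" using t by simp
  define c where "c = real i + l * real j - D"
  define E0 where "E0 = t powr \<eta> * \<rho> powr (-(D + \<eta> + 1))"
  define E2 where "E2 = r2 ^ 2 * \<rho> powr (-(D + 2))"
  have E0: "0 \<le> E0" and E2: "0 \<le> E2" unfolding E0_def E2_def by simp_all
  have wj: "wn ^ j \<le> r2 ^ j * t powr (l * real j)"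
  proof -
    have "wn ^ j \<le> (r2 * t powr l) ^ j" using wn by (intro power_mono) auto
    also have "\<dots> = r2 ^ j * t powr (l * real j)" using t by (simp add: power_mult_distrib powr_pow_nat)
    finally show ?thesis .
  qed
  have ti: "t ^ i = t powr (real i)" using t by (simp add: powr_realpow)
  have "t ^ i * wn ^ j \<le> t powr (real i) * (r2 ^ j * t powr (l * real j))"
    using wj ti t by (simp add: mult_left_mono)
  also have "\<dots> = r2 ^ j * (t powr D * t powr c)"
    unfolding c_def by (simp add: powr_add[symmetric] algebra_simps)
  finally have step1: "t ^ i * wn ^ j \<le> t powr D * (r2 ^ j * t powr c)" by (simp add: algebra_simps)
  have pij: "\<rho> powr (real i + real j) = \<rho> ^ i * \<rho> ^ j" using \<rho> by (simp add: powr_add powr_realpow)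
  have main: "r2 ^ j * t powr c \<le> \<rho> ^ i * \<rho> ^ j * (E0 + E2)"
  proof (cases "j \<le> 1")
    case True
    have ce: "\<eta> \<le> c" using c1[OF True] unfolding c_def .
    have "t powr c = t powr \<eta> * t powr (c - \<eta>)" by (simp add: powr_add[symmetric])
    also have "\<dots> \<le> t powr \<eta> * \<rho> powr (c - \<eta>)"
      using ce t by (intro mult_left_mono powr_mono2) auto
    also have "\<rho> powr (c - \<eta>) = \<rho> powr (real i + real j) * \<rho> powr (c - \<eta> - real i - real j)"
      by (simp add: powr_add[symmetric])
    also have "\<rho> powr (c - \<eta> - real i - real j) \<le> \<rho> powr (-(D + \<eta> + 1))"
    proof (rule powr_mono')
      have "l * real j \<ge> 0" using l by simp
      moreover have "real j \<le> 1" using True by simp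
      ultimately show "-(D + \<eta> + 1) \<le> c - \<eta> - real i - real j" unfolding c_def by linarith
    qed (use \<rho> \<rho>1 in auto)
    finally have a: "t powr c \<le> t powr \<eta> * (\<rho> powr (real i + real j) * \<rho> powr (-(D + \<eta> + 1)))"
      using \<rho> by (simp add: mult_left_mono)
    have r2j: "r2 ^ j \<le> 1" using r2 \<rho>1 by (intro power_le_one) auto
    have "r2 ^ j * t powr c \<le> 1 * t powr c" using r2j by (intro mult_right_mono) auto
    also have "\<dots> \<le> \<rho> ^ i * \<rho> ^ j * E0" using a unfolding E0_def pij by (simp add: algebra_simps)
    also have "\<dots> \<le> \<rho> ^ i * \<rho> ^ j * (E0 + E2)" using E2 \<rho> by (intro mult_left_mono) auto
    finally show ?thesis .
  next
    case False
    hence j2: "2 \<le> j" by simp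
    have "t powr c \<le> \<rho> powr c" using c0 t unfolding c_def by (intro powr_mono2) auto
    also have "\<rho> powr c = \<rho> powr (real i) * \<rho> powr (l * real j - D)" unfolding c_def
      by (simp only: powr_add[symmetric]) (simp add: algebra_simps)
    also have "\<dots> \<le> \<rho> powr (real i) * \<rho> powr (- D)"
      using l \<rho> \<rho>1 by (intro mult_left_mono powr_mono') auto
    finally have a: "t powr c \<le> \<rho> ^ i * \<rho> powr (- D)" using \<rho> by (simp add: powr_realpow)
    have "r2 ^ j = r2 ^ 2 * r2 ^ (j - 2)" by (metis j2 le_add_diff_inverse power_add mult.commute)
    also have "\<dots> \<le> r2 ^ 2 * \<rho> ^ (j - 2)" using r2 by (intro mult_left_mono power_mono) auto
    finally have b: "r2 ^ j \<le> r2 ^ 2 * \<rho> ^ (j - 2)" .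
    have "\<rho> ^ j = \<rho> ^ (j - 2) * \<rho> ^ 2" by (metis j2 le_add_diff_inverse power_add mult.commute)
    moreover have "\<rho> powr (-2) = inverse (\<rho> ^ 2)" using \<rho> by (simp add: powr_minus powr_realpow[of \<rho> 2, simplified])
    ultimately have pj: "\<rho> ^ (j - 2) = \<rho> ^ j * \<rho> powr (-2)" using \<rho> by (simp add: field_simps)
    have "r2 ^ j * t powr c \<le> (r2 ^ 2 * \<rho> ^ (j - 2)) * (\<rho> ^ i * \<rho> powr (- D))"
      using a b \<rho> by (intro mult_mono) auto
    also have "\<dots> = \<rho> ^ i * \<rho> ^ j * (r2 ^ 2 * (\<rho> powr (-2) * \<rho> powr (-D)))" unfolding pj
      by (simp add: algebra_simps)
    also have "\<rho> powr (-2) * \<rho> powr (-D) = \<rho> powr (-(D + 2))"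
      by (simp only: powr_add[symmetric]) (simp add: algebra_simps)
    also have "\<rho> ^ i * \<rho> ^ j * (r2 ^ 2 * \<rho> powr (-(D + 2))) \<le> \<rho> ^ i * \<rho> ^ j * (E0 + E2)"
      using E0 \<rho> unfolding E2_def by (intro mult_left_mono) auto
    finally show ?thesis .
  qed
  have "t powr D * (r2 ^ j * t powr c) \<le> t powr D * (\<rho> ^ i * \<rho> ^ j * (E0 + E2))"
    using main by (intro mult_left_mono) auto
  thus ?thesis using step1 unfolding E0_def E2_def by (simp add: algebra_simps)
qed


lemma q_bound:
  fixes q :: "complex \<Rightarrow> complex \<Rightarrow> complex" and b :: "nat \<times> nat \<Rightarrow> complex"
    and z w :: complex and t \<rho> r2 l D \<eta> R :: real
  assumes q_summable: "\<And>z w. cmod z < R \<Longrightarrow> cmod w < R \<Longrightarrow>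
           (\<lambda>(i, j). norm (b (i, j) * z ^ i * w ^ j)) summable_on UNIV"
    and q_eq: "\<And>z w. cmod z < R \<Longrightarrow> cmod w < R \<Longrightarrow>
           q z w = (\<Sum>\<^sub>\<infinity>(i, j). b (i, j) * z ^ i * w ^ j)"
    and N: "\<And>i j. b (i,j) \<noteq> 0 \<Longrightarrow> 0 \<le> real i + l * real j - D \<and> (j \<le> 1 \<longrightarrow> \<eta> \<le> real i + l * real j - D)"
    and \<rho>R: "\<rho> < R" and \<rho>1: "\<rho> \<le> 1" and \<eta>: "0 < \<eta>" and l: "0 < l"
    and t: "0 < t" "t \<le> \<rho>" and zt: "cmod z = t" and r2: "0 < r2" "r2 \<le> \<rho>"
    and wb: "cmod w \<le> r2 * t powr l"
  shows "cmod (q z w) \<le> (\<Sum>\<^sub>\<infinity>(i, j). norm (b (i, j) * complex_of_real \<rho> ^ i * complex_of_real \<rho> ^ j)) *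
           (t powr D * (t powr \<eta> * \<rho> powr (-(D + \<eta> + 1)) + r2 ^ 2 * \<rho> powr (-(D + 2))))"
proof -
  define K where "K = t powr D * (t powr \<eta> * \<rho> powr (-(D + \<eta> + 1)) + r2 ^ 2 * \<rho> powr (-(D + 2)))"
  define f where "f = (\<lambda>(i, j). b (i, j) * z ^ i * w ^ j)"
  define g where "g = (\<lambda>(i, j). norm (b (i, j) * complex_of_real \<rho> ^ i * complex_of_real \<rho> ^ j))"
  have \<rho>: "0 < \<rho>" using t by simp
  have zR: "cmod z < R" using zt t \<rho>R by simp
  have "t powr l \<le> 1" using powr_mono2[of l t 1] t \<rho>1 l by simp
  hence "r2 * t powr l \<le> r2 * 1" using r2 by (intro mult_left_mono) auto
  hence "r2 * t powr l \<le> r2" by simp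
  hence wR: "cmod w < R" using wb r2 \<rho>R by linarith
  have rR: "cmod (complex_of_real \<rho>) < R" using \<rho> \<rho>R by simp
  have fabs: "(\<lambda>x. norm (f x)) summable_on UNIV"
  proof -
    have "(\<lambda>x. norm (f x)) = (\<lambda>(i, j). norm (b (i, j) * z ^ i * w ^ j))"
      unfolding f_def by (rule ext) (simp add: case_prod_beta)
    thus ?thesis using q_summable[OF zR wR] by simp
  qed
  have gs: "g summable_on UNIV" unfolding g_def by (rule q_summable[OF rR rR])
  have "cmod (q z w) = norm (infsum f UNIV)" using q_eq[OF zR wR] unfolding f_def by simp
  also have "\<dots> \<le> infsum (\<lambda>x. norm (f x)) UNIV" by (rule norm_infsum_bound[OF fabs])
  also have "\<dots> \<le> infsum (\<lambda>x. g x * K) UNIV"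
  proof (rule infsum_mono[OF fabs summable_on_cmult_left[OF gs]])
    fix x :: "nat \<times> nat"
    obtain i j where x: "x = (i,j)" by fastforce
    show "norm (f x) \<le> g x * K"
    proof (cases "b (i,j) = 0")
      case True thus ?thesis unfolding x f_def g_def by simp
    next
      case False
      have tb0: "t ^ i * cmod w ^ j \<le> \<rho> ^ i * \<rho> ^ j * t powr D *
           (t powr \<eta> * \<rho> powr (-(D + \<eta> + 1)) + r2 ^ 2 * \<rho> powr (-(D + 2)))"
        by (rule term_bound[OF t \<rho>1 r2 l _ wb]) (use N[OF False] \<eta> in auto)
      hence tb: "t ^ i * cmod w ^ j \<le> \<rho> ^ i * \<rho> ^ j * K" unfolding K_def by (simp add: mult.assoc)
      have "norm (f x) = cmod (b (i,j)) * (t ^ i * cmod w ^ j)" unfolding x f_def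
        by (simp add: norm_mult norm_power zt)
      also have "\<dots> \<le> cmod (b (i,j)) * (\<rho> ^ i * \<rho> ^ j * K)" using tb by (intro mult_left_mono) auto
      also have "\<dots> = g x * K" unfolding x g_def using \<rho> by (simp add: norm_mult norm_power)
      finally show ?thesis .
    qed
  qed
  also have "\<dots> = infsum g UNIV * K" by (rule infsum_cmult_left) (use gs in simp)
  finally show ?thesis unfolding g_def K_def .
qed


lemma floor_step: "x < real i \<Longrightarrow> real_of_int \<lfloor>x\<rfloor> + 1 \<le> real i"
proof -
  assume "x < real i"
  hence "\<lfloor>x\<rfloor> < int i" by (simp add: floor_less_iff)
  hence "\<lfloor>x\<rfloor> + 1 \<le> int i" by simp
  hence "real_of_int (\<lfloor>x\<rfloor> + 1) \<le> real_of_int (int i)" by (simp only: of_int_le_iff)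
  thus ?thesis by simp
qed

theorem theorem2p13:
  fixes p h :: "complex \<Rightarrow> complex" and q :: "complex \<Rightarrow> complex \<Rightarrow> complex"
    and b :: "nat \<times> nat \<Rightarrow> complex" and a :: complex and \<delta> k :: nat and R :: real
  assumes R_pos: "R > 0"
    and delta: "\<delta> \<ge> 2" and a_nz: "a \<noteq> 0"
    and h_holo: "h holomorphic_on ball 0 R"
    and p_eq: "\<And>z. z \<in> ball 0 R \<Longrightarrow> p z = a * z ^ \<delta> + z ^ (\<delta> + 1) * h z"
    and q_summable: "\<And>z w. cmod z < R \<Longrightarrow> cmod w < R \<Longrightarrow>
           (\<lambda>(i, j). norm (b (i, j) * z ^ i * w ^ j)) summable_on UNIV"
    and q_eq: "\<And>z w. cmod z < R \<Longrightarrow> cmod w < R \<Longrightarrow>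
           q z w = (\<Sum>\<^sub>\<infinity>(i, j). b (i, j) * z ^ i * w ^ j)"
    and b00: "b (0, 0) = 0" and b01: "b (0, 1) = 0"
    and s_gt: "np_num b > 2"
    and k_range: "2 \<le> k" "k \<le> np_num b - 1"
    and case4: "np_T b k \<le> real \<delta>" "real \<delta> \<le> np_T b (k - 1)"
  shows "\<forall>l. 0 < l \<and> l < fst (np_vertex b k) / (real \<delta> - snd (np_vertex b k)) \<longrightarrow>
           (\<forall>\<epsilon>>0. \<exists>r1 r2. 0 < r1 \<and> r1 < \<epsilon> \<and> 0 < r2 \<and> r2 < \<epsilon> \<and>
              (\<lambda>(z, w). (p z, q z w)) ` U_region l r1 r2 \<subseteq> U_region l r1 r2)"
proof (intro allI impI)
  fix l \<epsilon> :: real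
  assume lh: "0 < l \<and> l < fst (np_vertex b k) / (real \<delta> - snd (np_vertex b k))" and \<epsilon>: "0 < \<epsilon>"
  have l0: "0 < l" using lh by simp
  have NI: "\<forall>i j. b (i,j) \<noteq> 0 \<longrightarrow> 0 \<le> real i + l * real j - real \<delta> * l \<and>
            (j \<le> 1 \<longrightarrow> 0 < real i + l * real j - real \<delta> * l)"
    using newton_ineq[OF b00 b01 s_gt k_range case4] lh by blast
  define D where "D = real \<delta> * l"
  define \<eta> where "\<eta> = min (real_of_int \<lfloor>D\<rfloor> + 1 - D) (real_of_int \<lfloor>D - l\<rfloor> + 1 - (D - l))"
  have \<eta>: "0 < \<eta>" unfolding \<eta>_def by linarith
  have N: "\<And>i j. b (i,j) \<noteq> 0 \<Longrightarrow> 0 \<le> real i + l * real j - D \<and> (j \<le> 1 \<longrightarrow> \<eta> \<le> real i + l * real j - D)"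
  proof -
    fix i j assume bij: "b (i,j) \<noteq> 0"
    have n: "0 \<le> real i + l * real j - D" "j \<le> 1 \<longrightarrow> 0 < real i + l * real j - D"
      using NI bij unfolding D_def by auto
    have "j \<le> 1 \<longrightarrow> \<eta> \<le> real i + l * real j - D"
    proof
      assume j1: "j \<le> 1"
      hence "j = 0 \<or> j = 1" by auto
      thus "\<eta> \<le> real i + l * real j - D"
      proof
        assume j0: "j = 0"
        hence "D < real i" using n(2) by simp
        hence "real_of_int \<lfloor>D\<rfloor> + 1 \<le> real i" by (rule floor_step)
        thus ?thesis using j0 unfolding \<eta>_def by simp
      next
        assume j0: "j = 1"
        hence "D - l < real i" using n(2) by simp
        hence "real_of_int \<lfloor>D - l\<rfloor> + 1 \<le> real i" by (rule floor_step)
        thus ?thesis using j0 unfolding \<eta>_def by simp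
      qed
    qed
    thus "0 \<le> real i + l * real j - D \<and> (j \<le> 1 \<longrightarrow> \<eta> \<le> real i + l * real j - D)" using n by simp
  qed
  define \<rho> where "\<rho> = min (R/2) (1/2)"
  have \<rho>: "0 < \<rho>" "\<rho> < R" "\<rho> \<le> 1" unfolding \<rho>_def using R_pos by auto
  have "continuous_on (cball 0 \<rho>) h"
    by (rule continuous_on_subset[OF holomorphic_on_imp_continuous_on[OF h_holo]]) (use \<rho> in auto)
  hence "compact (h ` cball 0 \<rho>)" by (intro compact_continuous_image) auto
  hence "bounded (h ` cball 0 \<rho>)" by (rule compact_imp_bounded)
  then obtain Hb where Hb: "Hb > 0" "\<And>z. z \<in> cball 0 \<rho> \<Longrightarrow> cmod (h z) \<le> Hb"
    unfolding bounded_pos by auto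
  define M where "M = (\<Sum>\<^sub>\<infinity>(i, j). norm (b (i, j) * complex_of_real \<rho> ^ i * complex_of_real \<rho> ^ j))"
  have M0: "0 \<le> M" unfolding M_def by (rule infsum_nonneg) (auto simp: case_prod_beta)
  define A where "A = (cmod a / 2) powr l"
  have A: "0 < A" unfolding A_def using a_nz by simp
  define r2 where "r2 = min (min \<rho> (\<epsilon>/2)) (A * \<rho> powr (D + 2) / (2 * (M + 1)))"
  have r2: "0 < r2" "r2 \<le> \<rho>" "r2 < \<epsilon>" "r2 \<le> A * \<rho> powr (D + 2) / (2 * (M + 1))"
    unfolding r2_def using \<rho> \<epsilon> A M0 by auto
  define \<kappa> where "\<kappa> = r2 * A * \<rho> powr (D + \<eta> + 1) / (2 * (M + 1))"
  have \<kappa>: "0 < \<kappa>" unfolding \<kappa>_def using r2 A M0 \<rho> by simp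
  define \<tau> where "\<tau> = min (1 / (cmod a + Hb + 1)) (cmod a / (2 * (Hb + 1)))"
  have \<tau>: "0 < \<tau>" unfolding \<tau>_def using Hb a_nz by (simp add: add_pos_nonneg)
  define r1 where "r1 = min (min \<rho> (\<epsilon>/2)) (min (\<kappa> powr (1/\<eta>)) \<tau>)"
  have r1: "0 < r1" "r1 \<le> \<rho>" "r1 < \<epsilon>" "r1 \<le> \<kappa> powr (1/\<eta>)" "r1 \<le> \<tau>"
    unfolding r1_def using \<rho> \<epsilon> \<kappa> \<tau> by auto
  have E2b: "M * (r2 ^ 2 * \<rho> powr (-(D + 2))) \<le> M * (r2 * A / (2 * (M + 1)))"
  proof -
    have "r2 * \<rho> powr (-(D + 2)) \<le> (A * \<rho> powr (D + 2) / (2 * (M + 1))) * \<rho> powr (-(D + 2))"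
      using r2 by (intro mult_right_mono) auto
    also have "\<dots> = A / (2 * (M + 1))"
    proof -
      have e: "\<rho> powr (D + 2) * \<rho> powr (- D - 2) = 1" using \<rho> by (simp add: powr_add[symmetric])
      show ?thesis using \<rho> e by (simp add: field_simps)
    qed
    finally have "r2 * (r2 * \<rho> powr (-(D + 2))) \<le> r2 * (A / (2 * (M + 1)))"
      using r2 by (intro mult_left_mono) auto
    hence "r2 ^ 2 * \<rho> powr (-(D + 2)) \<le> r2 * A / (2 * (M + 1))" by (simp add: power2_eq_square algebra_simps)
    thus ?thesis using M0 by (intro mult_left_mono) auto
  qed
  have final_num: "\<And>t. 0 < t \<Longrightarrow> t < r1 \<Longrightarrow>
      M * (t powr \<eta> * \<rho> powr (-(D + \<eta> + 1)) + r2 ^ 2 * \<rho> powr (-(D + 2))) < r2 * A"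
  proof -
    fix t :: real assume t: "0 < t" "t < r1"
    have "t powr \<eta> < (\<kappa> powr (1/\<eta>)) powr \<eta>"
      using t r1 \<eta> by (intro powr_less_mono2) auto
    also have "\<dots> = \<kappa>" using \<eta> \<kappa> by (simp add: powr_powr)
    finally have tk: "t powr \<eta> < \<kappa>" .
    have "t powr \<eta> * \<rho> powr (-(D + \<eta> + 1)) \<le> \<kappa> * \<rho> powr (-(D + \<eta> + 1))"
      using tk by (intro mult_right_mono) auto
    also have "\<dots> = r2 * A / (2 * (M + 1))" unfolding \<kappa>_def
    proof -
      have e: "\<rho> powr (D + \<eta> + 1) * \<rho> powr (- D - \<eta> - 1) = 1" using \<rho> by (simp add: powr_add[symmetric])
      show "r2 * A * \<rho> powr (D + \<eta> + 1) / (2 * (M + 1)) * \<rho> powr (- (D + \<eta> + 1)) = r2 * A / (2 * (M + 1))"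
        using \<rho> M0 e by (simp add: field_simps)
    qed
    finally have "M * (t powr \<eta> * \<rho> powr (-(D + \<eta> + 1))) \<le> M * (r2 * A / (2 * (M + 1)))"
      using M0 by (intro mult_left_mono) auto
    hence s1: "M * (t powr \<eta> * \<rho> powr (-(D + \<eta> + 1))) \<le> M * (r2 * A / (2 * (M + 1)))" .
    have sm: "M * (r2 * A / (2 * (M + 1))) + M * (r2 * A / (2 * (M + 1))) = M * (r2 * A / (M + 1))"
    proof -
      have Mp: "M + 1 \<noteq> 0" "2 * (M + 1) \<noteq> 0" using M0 by auto
      have h2: "r2 * A / (2 * (M + 1)) = (r2 * A / (M + 1)) / 2" by (simp add: mult.commute)
      have "r2 * A / (2 * (M + 1)) + r2 * A / (2 * (M + 1)) = r2 * A / (M + 1)"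
        unfolding h2 by (rule field_sum_of_halves)
      thus ?thesis by (metis distrib_left)
    qed
    have ds: "M * (t powr \<eta> * \<rho> powr (-(D + \<eta> + 1)) + r2 ^ 2 * \<rho> powr (-(D + 2)))
       = M * (t powr \<eta> * \<rho> powr (-(D + \<eta> + 1))) + M * (r2 ^ 2 * \<rho> powr (-(D + 2)))"
      by (rule distrib_left)
    have "M * (t powr \<eta> * \<rho> powr (-(D + \<eta> + 1)) + r2 ^ 2 * \<rho> powr (-(D + 2)))
           \<le> M * (r2 * A / (M + 1))" unfolding ds using add_mono[OF s1 E2b] unfolding sm .
    also have "\<dots> = (r2 * A) * (M / (M + 1))" using M0 by (simp add: field_simps)
    also have "\<dots> < (r2 * A) * 1"
      using M0 r2 A by (intro mult_strict_left_mono) auto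
    finally show "M * (t powr \<eta> * \<rho> powr (-(D + \<eta> + 1)) + r2 ^ 2 * \<rho> powr (-(D + 2))) < r2 * A"
      by simp
  qed
  have sub: "(\<lambda>(z, w). (p z, q z w)) ` U_region l r1 r2 \<subseteq> U_region l r1 r2"
  proof (rule subsetI)
    fix y assume "y \<in> (\<lambda>(z, w). (p z, q z w)) ` U_region l r1 r2"
    then obtain z w where zw: "cmod z < r1" "cmod w < r2 * cmod z powr l" and y: "y = (p z, q z w)"
      unfolding U_region_def by auto
    define t where "t = cmod z"
    have t0: "0 < t"
    proof (rule ccontr)
      assume "\<not> 0 < t" hence "z = 0" unfolding t_def by simp
      thus False using zw(2) by simp
    qed
    have tr1: "t < r1" using zw unfolding t_def by simp
    have t\<rho>: "t \<le> \<rho>" using tr1 r1 by simp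
    have t1: "t \<le> 1" using t\<rho> \<rho> by simp
    have zb: "z \<in> ball 0 R" using t\<rho> \<rho> unfolding t_def by simp
    have hz: "cmod (h z) \<le> Hb" using Hb(2)[of z] t\<rho> unfolding t_def by simp
    have pz: "p z = z ^ \<delta> * (a + z * h z)" using p_eq[OF zb] by (simp add: algebra_simps)
    have zh: "cmod (z * h z) \<le> t * Hb" unfolding t_def using hz by (simp add: norm_mult mult_left_mono)
    have "t * Hb < cmod a / 2"
    proof -
      have "t < cmod a / (2 * (Hb + 1))" using tr1 r1 unfolding \<tau>_def by simp
      hence "t * (2 * (Hb + 1)) < cmod a" using Hb by (simp add: pos_less_divide_eq)
      hence "2 * (t * Hb) + 2 * t < cmod a" by (simp add: algebra_simps)
      thus ?thesis using t0 by linarith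
    qed
    hence zh2: "cmod (z * h z) < cmod a / 2" using zh by simp
    have lowb: "cmod a / 2 \<le> cmod (a + z * h z)"
      using norm_triangle_ineq2[of a "- (z * h z)"] zh2 by simp
    have upb: "cmod (a + z * h z) \<le> cmod a + t * Hb"
      using norm_triangle_ineq[of a "z * h z"] zh by simp
    have pnorm: "cmod (p z) = t ^ \<delta> * cmod (a + z * h z)" unfolding pz t_def by (simp add: norm_mult norm_power)
    have pr1: "cmod (p z) < r1"
    proof -
      have "t ^ \<delta> \<le> t ^ 2" using t0 t1 delta by (intro power_decreasing) auto
      have "cmod (p z) \<le> t ^ 2 * (cmod a + Hb)"
      proof -
        have "cmod (p z) \<le> t ^ \<delta> * (cmod a + t * Hb)" unfolding pnorm using upb t0 by (intro mult_left_mono) auto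
        also have "\<dots> \<le> t ^ 2 * (cmod a + t * Hb)" using \<open>t ^ \<delta> \<le> t ^ 2\<close> Hb t0
          by (intro mult_right_mono) auto
        also have "\<dots> \<le> t ^ 2 * (cmod a + Hb)" using t1 t0 Hb
          by (intro mult_left_mono) (auto simp: mult_left_le_one_le)
        finally show ?thesis .
      qed
      moreover have "t * (cmod a + Hb) < 1"
      proof -
        have "t < 1 / (cmod a + Hb + 1)" using tr1 r1 unfolding \<tau>_def by simp
        moreover have dp: "0 < cmod a + Hb + 1" using Hb norm_ge_zero[of a] by linarith
        ultimately have "t * (cmod a + Hb + 1) < 1" by (simp add: pos_less_divide_eq)
        hence "t * (cmod a + Hb) + t < 1" by (simp add: algebra_simps)
        thus ?thesis using t0 by linarith
      qed
      hence "t * (t * (cmod a + Hb)) < t * 1" using t0 by (intro mult_strict_left_mono) auto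
      ultimately have "cmod (p z) < t" by (simp add: power2_eq_square algebra_simps)
      thus ?thesis using tr1 by simp
    qed
    have ppow: "t powr D * A \<le> cmod (p z) powr l"
    proof -
      have "cmod (p z) powr l = (t ^ \<delta>) powr l * cmod (a + z * h z) powr l"
        unfolding pnorm by (simp add: powr_mult)
      also have "(t ^ \<delta>) powr l = t powr D" unfolding D_def using t0
        by (simp add: powr_realpow[symmetric] powr_powr)
      finally have e: "cmod (p z) powr l = t powr D * cmod (a + z * h z) powr l" .
      have "A \<le> cmod (a + z * h z) powr l" unfolding A_def using lowb l0 a_nz
        by (intro powr_mono2) auto
      thus ?thesis unfolding e by (intro mult_left_mono) auto
    qed
    have qb: "cmod (q z w) \<le> M * (t powr D * (t powr \<eta> * \<rho> powr (-(D + \<eta> + 1)) + r2 ^ 2 * \<rho> powr (-(D + 2))))"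
      unfolding M_def
      by (rule q_bound[OF q_summable q_eq N \<rho>(2) \<rho>(3) \<eta> l0 t0 t\<rho> t_def[symmetric] r2(1) r2(2)])
         (use zw(2) t_def in simp_all)
    have "cmod (q z w) \<le> t powr D * (M * (t powr \<eta> * \<rho> powr (-(D + \<eta> + 1)) + r2 ^ 2 * \<rho> powr (-(D + 2))))"
      using qb by (simp add: algebra_simps)
    also have "\<dots> < t powr D * (r2 * A)" using final_num[OF t0 tr1] t0 by (intro mult_strict_left_mono) auto
    also have "\<dots> = r2 * (t powr D * A)" by simp
    also have "\<dots> \<le> r2 * cmod (p z) powr l" using ppow r2 by (intro mult_left_mono) auto
    finally have qlt: "cmod (q z w) < r2 * cmod (p z) powr l" .
    show "y \<in> U_region l r1 r2" unfolding y U_region_def using pr1 qlt by simp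
  qed
  show "\<exists>r1 r2. 0 < r1 \<and> r1 < \<epsilon> \<and> 0 < r2 \<and> r2 < \<epsilon> \<and>
              (\<lambda>(z, w). (p z, q z w)) ` U_region l r1 r2 \<subseteq> U_region l r1 r2"
    using r1 r2 sub by blast
qed

end
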